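(* Let $X$ be a strongly $0$-dimensional $\sigma$-compact metrizable space. Then $\mathrm{SR}(X)$ is a $G_\delta$ subset of $(\mathrm{Met}(X),\mathcal{D}_X)$.
   Context: $\mathrm{Met}(X)$ denotes the set of all metrics on $X$ generating the topology of $X$, equipped with the supremum metric $\mathcal{D}_X(d,e)=\sup_{x,y\in X}|d(x,y)-e(x,y)|$ (values in $[0,\infty]$) and the topology generated by its open balls. A topological space is strongly $0$-dimensional if for every pair $A,B$ of disjoint closed subsets there is a clopen set $V$ with $A\subseteq V$, $V\cap B=\emptyset$. A metric $d$ is strongly rigid if $d(x,y)=d(u,v)\neq0$ implies $\{x,y\}=\{u,v\}$; $\mathrm{SR}(X)$ is the set of strongly rigid metrics in $\mathrm{Met}(X)$. A $G_\delta$ set is a countable intersection of open sets. *)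

theory Defs
  imports "HOL-Analysis.Analysis"
begin

text \<open>A metric is a function
  of type 'a => 'a => real; to have one canonical representative per metric we require
  it to vanish outside topspace X x topspace X.\<close>
definition Met :: "'a topology \<Rightarrow> ('a \<Rightarrow> 'a \<Rightarrow> real) set" where
  "Met X = {d. Metric_space (topspace X) d \<and> Metric_space.mtopology (topspace X) d = X \<and>
              (\<forall>x y. x \<notin> topspace X \<or> y \<notin> topspace X \<longrightarrow> d x y = 0)}"

definition supD :: "'a topology \<Rightarrow> ('a \<Rightarrow> 'a \<Rightarrow> real) \<Rightarrow> ('a \<Rightarrow> 'a \<Rightarrow> real) \<Rightarrow> ennreal" where
  "supD X d e = (SUP p \<in> topspace X \<times> topspace X. ennreal \<bar>d (fst p) (snd p) - e (fst p) (snd p)\<bar>)"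

definition Met_topology :: "'a topology \<Rightarrow> ('a \<Rightarrow> 'a \<Rightarrow> real) topology" where
  "Met_topology X = topology_generated_by
     {{e \<in> Met X. supD X d e < ennreal r} | d r. d \<in> Met X \<and> r > 0}"

definition strongly_zero_dim :: "'a topology \<Rightarrow> bool" where
  "strongly_zero_dim X \<longleftrightarrow> (\<forall>A B. closedin X A \<and> closedin X B \<and> A \<inter> B = {} \<longrightarrow>
      (\<exists>V. closedin X V \<and> openin X V \<and> A \<subseteq> V \<and> V \<inter> B = {}))"

definition sigma_compact_space :: "'a topology \<Rightarrow> bool" where
  "sigma_compact_space X \<longleftrightarrow> (\<exists>K :: nat \<Rightarrow> 'a set. (\<forall>n. compactin X (K n)) \<and> \<Union> (range K) = topspace X)"

definition strongly_rigid :: "'a set \<Rightarrow> ('a \<Rightarrow> 'a \<Rightarrow> real) \<Rightarrow> bool" where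
  "strongly_rigid M d \<longleftrightarrow> (\<forall>x\<in>M. \<forall>y\<in>M. \<forall>u\<in>M. \<forall>v\<in>M.
      d x y = d u v \<and> d x y \<noteq> 0 \<longrightarrow> {x, y} = {u, v})"

definition SR :: "'a topology \<Rightarrow> ('a \<Rightarrow> 'a \<Rightarrow> real) set" where
  "SR X = {d \<in> Met X. strongly_rigid (topspace X) d}"

end

theory Submission
  imports Defs
begin

lemma metric_cont:
  assumes "Metric_space M d" "Metric_space.mtopology M d = X"
    "continuous_map T X f" "continuous_map T X g"
  shows "continuous_map T euclideanreal (\<lambda>t. d (f t) (g t))"
proof -
  interpret Metric_space M d by fact
  have "continuous_map T euclideanreal (\<lambda>t. mdist (metric (M,d)) (f t) (g t))"
    by (rule continuous_map_mdist) (use assms in auto)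
  then show ?thesis by simp
qed

lemma proj_cont:
  "continuous_map (prod_topology (prod_topology X X) (prod_topology X X)) X (\<lambda>q. fst (fst q))"
  "continuous_map (prod_topology (prod_topology X X) (prod_topology X X)) X (\<lambda>q. snd (fst q))"
  "continuous_map (prod_topology (prod_topology X X) (prod_topology X X)) X (\<lambda>q. fst (snd q))"
  "continuous_map (prod_topology (prod_topology X X) (prod_topology X X)) X (\<lambda>q. snd (snd q))"
  using continuous_map_compose[OF continuous_map_fst continuous_map_fst]
    continuous_map_compose[OF continuous_map_fst continuous_map_snd]
    continuous_map_compose[OF continuous_map_snd continuous_map_fst]
    continuous_map_compose[OF continuous_map_snd continuous_map_snd]
  by (auto simp: o_def)

lemma Met_cont:
  assumes "d \<in> Met X" "continuous_map T X f" "continuous_map T X g"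
  shows "continuous_map T euclideanreal (\<lambda>t. d (f t) (g t))"
  using assms metric_cont[of "topspace X" d X T f g] unfolding Met_def by auto

theorem proposition5p3:
  fixes X :: "'a topology"
  assumes "strongly_zero_dim X" and "sigma_compact_space X" and "metrizable_space X"
  shows "gdelta_in (Met_topology X) (SR X)"
proof -
  obtain K :: "nat \<Rightarrow> 'a set" where Kc: "\<And>n. compactin X (K n)" and KU: "\<Union>(range K) = topspace X"
    using assms(2) unfolding sigma_compact_space_def by blast
  obtain M \<rho> where \<rho>: "Metric_space M \<rho>" and X\<rho>: "X = Metric_space.mtopology M \<rho>"
    using assms(3) unfolding metrizable_space_def by blast
  interpret R: Metric_space M \<rho> by fact
  have MX: "M = topspace X" using X\<rho> by simp
  define Q where "Q = prod_topology (prod_topology X X) (prod_topology X X)"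
  define K' where "K' n = \<Union>(K ` {..n})" for n
  have K'c: "compactin X (K' n)" for n unfolding K'_def by (rule compactin_Union) (auto intro: Kc)
  define f where "f q = min (\<rho> (fst (fst q)) (snd (fst q)))
     (min (\<rho> (fst (fst q)) (fst (snd q)) + \<rho> (snd (fst q)) (snd (snd q)))
          (\<rho> (fst (fst q)) (snd (snd q)) + \<rho> (snd (fst q)) (fst (snd q))))" for q
  have rc: "continuous_map Q euclideanreal (\<lambda>t. \<rho> (a t) (b t))"
    if "continuous_map Q X a" "continuous_map Q X b" for a b
    using metric_cont[OF \<rho> X\<rho>[symmetric] that] .
  have fc: "continuous_map Q euclideanreal f"
    unfolding f_def using proj_cont[of X, folded Q_def]
    by (intro continuous_map_real_min continuous_map_add rc) auto
  define C where "C n k = ((K' n \<times> K' n) \<times> (K' n \<times> K' n)) \<inter> {q \<in> topspace Q. f q \<in> {1 / real (Suc k)..}}" for n k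
  have Cc: "compactin Q (C n k)" for n k
  proof -
    have "compactin Q ((K' n \<times> K' n) \<times> (K' n \<times> K' n))"
      unfolding Q_def using K'c by (simp add: compactin_Times)
    moreover have "closedin Q {q \<in> topspace Q. f q \<in> {1 / real (Suc k)..}}"
      by (rule closedin_continuous_map_preimage[OF fc]) auto
    ultimately have "compactin Q ({q \<in> topspace Q. f q \<in> {1 / real (Suc k)..}} \<inter> ((K' n \<times> K' n) \<times> (K' n \<times> K' n)))"
      by (intro closed_Int_compactin)
    then show ?thesis unfolding C_def by (simp add: Int_commute)
  qed
  have Csub: "C n k \<subseteq> topspace Q" for n k unfolding C_def by auto
  have TQ: "topspace Q = (topspace X \<times> topspace X) \<times> (topspace X \<times> topspace X)"
    unfolding Q_def by simp
  define U where "U n k = {d \<in> Met X. \<forall>q\<in>C n k. d (fst (fst q)) (snd (fst q)) \<noteq> d (fst (snd q)) (snd (snd q))}" for n k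
  define B where "B = {{e \<in> Met X. supD X d e < ennreal r} | d r. d \<in> Met X \<and> r > 0}"
  have MT: "Met_topology X = topology_generated_by B" unfolding Met_topology_def B_def ..
  have supD0: "supD X d d < ennreal r" if "r > 0" for d and r :: real
  proof -
    have "supD X d d \<le> 0" unfolding supD_def by (rule SUP_least) simp
    then show ?thesis using that by (simp add: le_zero_eq)
  qed
  have top: "topspace (Met_topology X) = Met X"
  proof -
    have "\<Union>B = Met X"
    proof
      show "\<Union> B \<subseteq> Met X" unfolding B_def by auto
      show "Met X \<subseteq> \<Union> B"
      proof
        fix d assume "d \<in> Met X"
        then have "d \<in> {e \<in> Met X. supD X d e < ennreal 1}" using supD0[of 1] by simp
        moreover have "{e \<in> Met X. supD X d e < ennreal 1} \<in> B" unfolding B_def using \<open>d \<in> Met X\<close>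
          by (intro CollectI exI[of _ d] exI[of _ "1::real"]) simp
        ultimately show "d \<in> \<Union> B" by (rule UnionI[rotated])
      qed
    qed
    then show ?thesis unfolding MT by simp
  qed
  have Uopen: "openin (Met_topology X) (U n k)" for n k
  proof (subst openin_subopen, intro ballI)
    fix d assume dU: "d \<in> U n k"
    then have dM: "d \<in> Met X" unfolding U_def by auto
    define g where "g q = \<bar>d (fst (fst q)) (snd (fst q)) - d (fst (snd q)) (snd (snd q))\<bar>" for q
    obtain \<delta> where \<delta>: "\<delta> > 0" "\<And>q. q \<in> C n k \<Longrightarrow> \<delta> \<le> g q"
    proof (cases "C n k = {}")
      case True then show ?thesis using that[of 1] by auto
    next
      case False
      have gc: "continuous_map Q euclideanreal g"
        unfolding g_def using proj_cont[of X, folded Q_def]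
        by (intro continuous_map_real_abs continuous_map_diff Met_cont[OF dM]) auto
      have "compact (g ` C n k)"
        using image_compactin[OF Cc gc] by simp
      moreover have "g ` C n k \<noteq> {}" using False by simp
      ultimately have "\<exists>s\<in>g ` C n k. \<forall>t\<in>g ` C n k. s \<le> t" by (rule compact_attains_inf)
      then obtain s where s1: "s \<in> g ` C n k" and s2: "\<forall>t\<in>g ` C n k. s \<le> t" by (rule bexE)
      note s = s1 s2[rule_format]
      from s1 obtain q0 where q0: "q0 \<in> C n k" "s = g q0" by auto
      have "s > 0" using q0 dU unfolding U_def g_def by auto
      show ?thesis
      proof (rule that[of s])
        show "0 < s" by fact
        fix q assume "q \<in> C n k"
        then show "s \<le> g q" using s2 by blast
      qed
    qed
    define T where "T = {e \<in> Met X. supD X d e < ennreal (\<delta>/2)}"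
    have "T \<in> B" unfolding T_def B_def using dM \<delta>
      by (intro CollectI exI[of _ d] exI[of _ "\<delta>/2"]) simp
    then have "openin (Met_topology X) T" unfolding MT by (rule topology_generated_by_Basis)
    moreover have "d \<in> T" unfolding T_def using dM supD0 \<delta> by simp
    moreover have "T \<subseteq> U n k"
    proof
      fix e assume eT: "e \<in> T"
      have close: "\<bar>d a b - e a b\<bar> < \<delta>/2" if "a \<in> topspace X" "b \<in> topspace X" for a b
      proof -
        have "ennreal \<bar>d a b - e a b\<bar> \<le> supD X d e"
          unfolding supD_def using that
          by (intro SUP_upper2[of "(a,b)"]) auto
        also have "\<dots> < ennreal (\<delta>/2)" using eT unfolding T_def by simp
        finally show ?thesis by (simp add: ennreal_less_iff)
      qed
      show "e \<in> U n k" unfolding U_def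
      proof (intro CollectI conjI ballI)
        show "e \<in> Met X" using eT unfolding T_def by simp
        fix q assume qC: "q \<in> C n k"
        then have qT: "q \<in> topspace Q" using Csub by auto
        have q4: "q \<in> (topspace X \<times> topspace X) \<times> (topspace X \<times> topspace X)"
          using qT unfolding TQ .
        have p4: "fst (fst q) \<in> topspace X" "snd (fst q) \<in> topspace X"
             "fst (snd q) \<in> topspace X" "snd (snd q) \<in> topspace X"
          using q4 by (simp_all only: mem_Times_iff)
        have 1: "\<bar>d (fst (fst q)) (snd (fst q)) - e (fst (fst q)) (snd (fst q))\<bar> < \<delta>/2"
          by (intro close p4)
        have 2: "\<bar>d (fst (snd q)) (snd (snd q)) - e (fst (snd q)) (snd (snd q))\<bar> < \<delta>/2"
          by (intro close p4)
        have 3: "\<delta> \<le> g q" using \<delta>(2) qC .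
        show "e (fst (fst q)) (snd (fst q)) \<noteq> e (fst (snd q)) (snd (snd q))"
          using 1 2 3 unfolding g_def by linarith
      qed
    qed
    ultimately show "\<exists>T. openin (Met_topology X) T \<and> d \<in> T \<and> T \<subseteq> U n k" by blast
  qed
  have SReq: "SR X = \<Inter> (range (\<lambda>(n,k). U n k))"
  proof
    show "SR X \<subseteq> \<Inter> (range (\<lambda>(n,k). U n k))"
    proof (clarsimp)
      fix d n k assume dS: "d \<in> SR X"
      then have dM: "d \<in> Met X" and sr: "strongly_rigid (topspace X) d" unfolding SR_def by auto
      interpret D: Metric_space "topspace X" d using dM unfolding Met_def by auto
      show "d \<in> U n k" unfolding U_def
      proof (intro CollectI conjI ballI dM)
        fix q assume qC: "q \<in> C n k"
        obtain x y u v where q: "q = ((x,y),(u,v))" by (metis prod.collapse)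
        have pts: "x \<in> topspace X" "y \<in> topspace X" "u \<in> topspace X" "v \<in> topspace X"
          using qC Csub TQ q by auto
        have fq: "f q > 0" using qC unfolding C_def
          by (auto intro: less_le_trans[of 0 "1 / real (Suc k)"])
        have xy: "x \<noteq> y" using fq q pts MX unfolding f_def by auto
        have ne: "{x,y} \<noteq> {u,v}"
        proof
          assume "{x,y} = {u,v}"
          then have "(x = u \<and> y = v) \<or> (x = v \<and> y = u)" by (metis doubleton_eq_iff)
          then show False using fq q pts MX unfolding f_def by auto
        qed
        have "d x y \<noteq> 0" using xy pts by simp
        have "d x y \<noteq> d u v"
        proof
          assume "d x y = d u v"
          then have "d x y = d u v \<and> d x y \<noteq> 0" using \<open>d x y \<noteq> 0\<close> by simp
          then have "{x,y} = {u,v}" using sr pts unfolding strongly_rigid_def by blast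
          then show False using ne by simp
        qed
        then show "d (fst (fst q)) (snd (fst q)) \<noteq> d (fst (snd q)) (snd (snd q))"
          unfolding q by simp
      qed
    qed
    show "\<Inter> (range (\<lambda>(n,k). U n k)) \<subseteq> SR X"
    proof
      fix d assume dI: "d \<in> \<Inter> (range (\<lambda>(n,k). U n k))"
      then have dU: "\<And>n k. d \<in> U n k" by auto
      then have dM: "d \<in> Met X" unfolding U_def by auto
      interpret D: Metric_space "topspace X" d using dM unfolding Met_def by auto
      have "strongly_rigid (topspace X) d"
        unfolding strongly_rigid_def
      proof (intro ballI impI)
        fix x y u v assume pts: "x \<in> topspace X" "y \<in> topspace X" "u \<in> topspace X" "v \<in> topspace X"
          and eq: "d x y = d u v \<and> d x y \<noteq> 0"
        show "{x, y} = {u, v}"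
        proof (rule ccontr)
          assume ne: "{x, y} \<noteq> {u, v}"
          have xy: "x \<noteq> y" using eq pts by auto
          define q where "q = ((x,y),(u,v))"
          have pM: "x \<in> M" "y \<in> M" "u \<in> M" "v \<in> M" using pts MX by simp_all
          have pos: "\<rho> a b > 0" if "a \<in> M" "b \<in> M" "a \<noteq> b" for a b
          proof -
            have "\<rho> a b \<noteq> 0" using R.zero[OF that(1,2)] that(3) by simp
            then show ?thesis using R.nonneg[of a b] by linarith
          qed
          have a: "\<rho> x y > 0" using pos[OF pM(1,2) xy] .
          have b: "\<rho> x u + \<rho> y v > 0"
          proof (cases "x = u")
            case True
            then have "y \<noteq> v" using ne by auto
            then show ?thesis using pos[OF pM(2,4)] R.nonneg[of x u] by linarith
          next
            case False
            then show ?thesis using pos[OF pM(1,3)] R.nonneg[of y v] by linarith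
          qed
          have c: "\<rho> x v + \<rho> y u > 0"
          proof (cases "x = v")
            case True
            then have "y \<noteq> u" using ne by auto
            then show ?thesis using pos[OF pM(2,3)] R.nonneg[of x v] by linarith
          next
            case False
            then show ?thesis using pos[OF pM(1,4)] R.nonneg[of y u] by linarith
          qed
          have fq: "f q > 0" unfolding f_def q_def using a b c by simp
          obtain k where k: "inverse (real (Suc k)) < f q" using reals_Archimedean[OF fq] by blast
          have KUx: "\<exists>i. z \<in> K i" if "z \<in> topspace X" for z
            using that KU by (simp add: set_eq_iff)
          obtain i1 where i1: "x \<in> K i1" using KUx[OF pts(1)] by (elim exE)
          obtain i2 where i2: "y \<in> K i2" using KUx[OF pts(2)] by (elim exE)
          obtain i3 where i3: "u \<in> K i3" using KUx[OF pts(3)] by (elim exE)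
          obtain i4 where i4: "v \<in> K i4" using KUx[OF pts(4)] by (elim exE)
          define n where "n = max (max i1 i2) (max i3 i4)"
          have inK: "z \<in> K' n" if "z \<in> K i" "i \<le> n" for z i
            unfolding K'_def using that by auto
          have m: "x \<in> K' n" "y \<in> K' n" "u \<in> K' n" "v \<in> K' n"
            using inK[OF i1] inK[OF i2] inK[OF i3] inK[OF i4] by (simp_all add: n_def)
          have qK: "q \<in> (K' n \<times> K' n) \<times> (K' n \<times> K' n)" unfolding q_def using m by simp
          have qT: "q \<in> topspace Q" unfolding TQ q_def using pts by simp
          have fk: "f q \<in> {1 / real (Suc k)..}" using k by (simp add: inverse_eq_divide)
          have "q \<in> C n k" unfolding C_def using qK qT fk by simp
          then show False using dU[of n k] eq unfolding U_def q_def by auto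
        qed
      qed
      then show "d \<in> SR X" unfolding SR_def using dM by auto
    qed
  qed
  show ?thesis
    unfolding gdelta_in_alt
  proof
    show "SR X \<subseteq> topspace (Met_topology X)" unfolding top SR_def by auto
    show "(countable intersection_of openin (Met_topology X)) (SR X)"
      unfolding SReq intersection_of_def
      by (intro exI[of _ "range (\<lambda>(n,k). U n k)"]) (auto intro: Uopen)
  qed
qed

end
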